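(* Let $n,m$ be integers with $2\le n\le m$ and $(n,m)\ne(2,4)$. Then $$\gamma^{LD}(K_n\square K_m)-1\le \gamma^{LD}(K_n\times K_m)\le \gamma^{LD}(K_n\square K_m).$$ Moreover, if $\gamma^{LD}(K_n\times K_m)=\gamma^{LD}(K_n\square K_m)-1$, then an optimal (minimum-cardinality) locating-dominating code $C$ in $K_n\times K_m$ has a non-codeword $v$ such that $I(K_n\times K_m, C;v)=C$.
   Context: $K_q$ is the complete graph on vertex set $\{1,\dots,q\}$. The Cartesian product $G_1\square G_2$ has vertex set $V_1\times V_2$, with $(u_1,u_2)$ adjacent to $(v_1,v_2)$ iff ($u_1=v_1$ and $u_2v_2\in E_2$) or ($u_2=v_2$ and $u_1v_1\in E_1$). The direct product $G_1\times G_2$ has vertex set $V_1\times V_2$, with $(u_1,u_2)$ adjacent to $(v_1,v_2)$ iff $u_1v_1\in E_1$ and $u_2v_2\in E_2$. For a graph $G$, a vertex $v$ and a code (nonempty vertex subset) $C$, $I(G,C;v)=N[v]\cap C$ where $N[v]$ is the closed neighbourhood in $G$. A code $C$ is locating-dominating in $G$ if for all distinct non-codewords $u,v$, $I(C;u)\ne\emptyset$ and $I(C;u)\ne I(C;v)$. $\gamma^{LD}(G)$ is the minimum size of a locating-dominating code in $G$. *)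

theory Defs
  imports Main
begin

text \<open>A (simple) graph is given by a vertex set V and a symmetric irreflexive
  adjacency relation adj.\<close>

definition closed_nbhd :: "'a set \<Rightarrow> ('a \<Rightarrow> 'a \<Rightarrow> bool) \<Rightarrow> 'a \<Rightarrow> 'a set" where
  "closed_nbhd V adj v = {u \<in> V. u = v \<or> adj v u}"

definition I_set :: "'a set \<Rightarrow> ('a \<Rightarrow> 'a \<Rightarrow> bool) \<Rightarrow> 'a set \<Rightarrow> 'a \<Rightarrow> 'a set" where
  "I_set V adj C v = closed_nbhd V adj v \<inter> C"

definition is_LD :: "'a set \<Rightarrow> ('a \<Rightarrow> 'a \<Rightarrow> bool) \<Rightarrow> 'a set \<Rightarrow> bool" where
  "is_LD V adj C \<longleftrightarrow> C \<subseteq> V \<and> C \<noteq> {} \<and>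
     (\<forall>u \<in> V - C. I_set V adj C u \<noteq> {}) \<and>
     (\<forall>u \<in> V - C. \<forall>v \<in> V - C. u \<noteq> v \<longrightarrow> I_set V adj C u \<noteq> I_set V adj C v)"

definition gamma_LD :: "'a set \<Rightarrow> ('a \<Rightarrow> 'a \<Rightarrow> bool) \<Rightarrow> nat" where
  "gamma_LD V adj = (LEAST k. \<exists>C. is_LD V adj C \<and> card C = k)"

definition KV :: "nat \<Rightarrow> nat \<Rightarrow> (nat \<times> nat) set" where
  "KV n m = {1..n} \<times> {1..m}"

definition cart_adj :: "nat \<times> nat \<Rightarrow> nat \<times> nat \<Rightarrow> bool" where
  "cart_adj u v \<longleftrightarrow> (fst u = fst v \<and> snd u \<noteq> snd v) \<or> (snd u = snd v \<and> fst u \<noteq> fst v)"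

definition direct_adj :: "nat \<times> nat \<Rightarrow> nat \<times> nat \<Rightarrow> bool" where
  "direct_adj u v \<longleftrightarrow> fst u \<noteq> fst v \<and> snd u \<noteq> snd v"

end

theory Submission imports Defs begin

lemma mem_I: "c \<in> I_set V adj C u \<longleftrightarrow> c \<in> V \<and> c \<in> C \<and> (c = u \<or> adj u c)"
  by (auto simp: I_set_def closed_nbhd_def)

lemma memC: "(x, y) \<in> I_set V cart_adj D (a, b) \<longleftrightarrow> (x, y) \<in> V \<and> (x, y) \<in> D \<and> (x = a \<or> y = b)"
  by (auto simp: mem_I cart_adj_def)

lemma I_sub: "I_set V adj C u \<subseteq> C"
  by (auto simp: I_set_def)

lemma I_dir_eq:
  assumes "v \<notin> C" "C \<subseteq> V"
  shows "I_set V direct_adj C v = C - I_set V cart_adj C v"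
proof -
  have d: "direct_adj v u \<longleftrightarrow> \<not> cart_adj v u" if "u \<noteq> v" for u
    using that by (cases u; cases v) (auto simp: direct_adj_def cart_adj_def)
  show ?thesis
  proof (rule set_eqI)
    fix c
    show "c \<in> I_set V direct_adj C v \<longleftrightarrow> c \<in> C - I_set V cart_adj C v"
      using assms d[of c] by (auto simp: mem_I)
  qed
qed

lemma is_LD_V: "V \<noteq> {} \<Longrightarrow> is_LD V adj V"
  by (auto simp: is_LD_def)

lemma gamma_le: "is_LD V adj C \<Longrightarrow> gamma_LD V adj \<le> card C"
  unfolding gamma_LD_def by (rule Least_le) blast

lemma gamma_ex: "V \<noteq> {} \<Longrightarrow> \<exists>C. is_LD V adj C \<and> card C = gamma_LD V adj"
proof -
  assume "V \<noteq> {}"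
  then have "is_LD V adj V" by (rule is_LD_V)
  then have "\<exists>k. \<exists>C. is_LD V adj C \<and> card C = k" by blast
  then show ?thesis unfolding gamma_LD_def by (rule LeastI_ex)
qed

lemma count_LD:
  assumes "finite V" "is_LD V adj C"
  shows "card (V - C) + 1 \<le> 2 ^ card C"
proof -
  have CV: "C \<subseteq> V" using assms(2) by (auto simp: is_LD_def)
  have fC: "finite C" using CV assms(1) finite_subset by blast
  have dist: "\<forall>u \<in> V - C. \<forall>v \<in> V - C. u \<noteq> v \<longrightarrow> I_set V adj C u \<noteq> I_set V adj C v"
    and dom: "\<forall>u \<in> V - C. I_set V adj C u \<noteq> {}"
    using assms(2) by (simp_all add: is_LD_def)
  have inj: "inj_on (I_set V adj C) (V - C)"
    unfolding inj_on_def using dist by metis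
  have img: "I_set V adj C ` (V - C) \<subseteq> Pow C - {{}}"
    using dom I_sub[of V adj C] by auto
  have "card (V - C) \<le> card (Pow C - {{}})"
    by (rule card_inj_on_le[OF inj img]) (use fC in auto)
  also have "\<dots> = 2 ^ card C - 1"
    using fC by (simp add: card_Pow)
  finally show ?thesis
    using one_le_power[of "2::nat" "card C"] by linarith
qed

lemma sub_I_iff: "C \<subseteq> I_set V adj C u \<longleftrightarrow> I_set V adj C u = C"
  using I_sub[of V adj C u] by blast

lemma dir_LD_iff:
  assumes "C \<subseteq> V" "C \<noteq> {}"
  shows "is_LD V direct_adj C \<longleftrightarrow>
     (\<forall>u \<in> V - C. I_set V cart_adj C u \<noteq> C) \<and>
     (\<forall>u \<in> V - C. \<forall>v \<in> V - C. u \<noteq> v \<longrightarrow> I_set V cart_adj C u \<noteq> I_set V cart_adj C v)"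
proof -
  have eq: "(C - X = C - Y) \<longleftrightarrow> X = Y" if "X \<subseteq> C" "Y \<subseteq> C" for X Y :: "(nat \<times> nat) set"
    using that by blast
  have e1: "(C - X = {}) \<longleftrightarrow> X = C" if "X \<subseteq> C" for X :: "(nat \<times> nat) set"
    using that by blast
  show ?thesis using assms
    by (simp add: is_LD_def I_dir_eq eq e1 I_sub sub_I_iff)
qed

lemma struct_lb:
  assumes n2: "2 \<le> n" and m2: "2 \<le> m" and LD: "is_LD (KV n m) cart_adj C"
    and v: "v \<in> KV n m - C" and IC: "I_set (KV n m) cart_adj C v = C"
  shows "n + m - 3 \<le> card C"
proof -
  obtain p q where vpq: "v = (p, q)" by (cases v)
  have pq: "p \<in> {1..n}" "q \<in> {1..m}" using v vpq by (auto simp: KV_def)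
  define S where "S = ({p} \<times> ({1..m} - {q})) \<union> (({1..n} - {p}) \<times> {q})"
  have CS: "C \<subseteq> S"
  proof
    fix c assume "c \<in> C"
    then have "c \<in> I_set (KV n m) cart_adj C v" using IC by simp
    then show "c \<in> S" using v vpq
      by (cases c) (auto simp: S_def KV_def cart_adj_def mem_I)
  qed
  have finS: "finite S" unfolding S_def by auto
  have cardS: "card S = (m - 1) + (n - 1)"
  proof -
    have "card S = card ({p} \<times> ({1..m} - {q})) + card (({1..n} - {p}) \<times> {q})"
      unfolding S_def by (rule card_Un_disjoint) auto
    also have "\<dots> = (m - 1) + (n - 1)"
      using pq by (simp add: card_cartesian_product)
    finally show ?thesis .
  qed
  have dist: "\<forall>u \<in> KV n m - C. \<forall>w \<in> KV n m - C. u \<noteq> w \<longrightarrow> I_set (KV n m) cart_adj C u \<noteq> I_set (KV n m) cart_adj C w"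
    and dom: "\<forall>u \<in> KV n m - C. I_set (KV n m) cart_adj C u \<noteq> {}"
    using LD by (simp_all add: is_LD_def)
  have Iform: "I_set (KV n m) cart_adj C (i, j) = C \<inter> {(p, j), (i, q)}"
    if "i \<noteq> p" "j \<noteq> q" for i j
  proof (rule set_eqI)
    fix c
    show "c \<in> I_set (KV n m) cart_adj C (i, j) \<longleftrightarrow> c \<in> C \<inter> {(p, j), (i, q)}"
    proof
      assume "c \<in> I_set (KV n m) cart_adj C (i, j)"
      then show "c \<in> C \<inter> {(p, j), (i, q)}" using CS that
        by (cases c) (auto simp: S_def cart_adj_def mem_I)
    next
      assume "c \<in> C \<inter> {(p, j), (i, q)}"
      then show "c \<in> I_set (KV n m) cart_adj C (i, j)" using CS that pq
        by (cases c) (auto simp: S_def cart_adj_def mem_I KV_def)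
    qed
  qed
  have notC: "(i, j) \<notin> C" if "i \<noteq> p" "j \<noteq> q" for i j
    using CS that by (auto simp: S_def)
  obtain i0 where i0: "i0 \<in> {1..n}" "i0 \<noteq> p"
  proof -
    have "(if p = 1 then 2 else 1) \<in> {1..n} \<and> (if p = 1 then 2 else 1) \<noteq> p" using n2 by auto
    then show ?thesis using that by blast
  qed
  obtain j0 where j0: "j0 \<in> {1..m}" "j0 \<noteq> q"
  proof -
    have "(if q = 1 then 2 else 1) \<in> {1..m} \<and> (if q = 1 then 2 else 1) \<noteq> q" using m2 by auto
    then show ?thesis using that by blast
  qed
  have uniq: "\<forall>x \<in> S - C. \<forall>y \<in> S - C. x = y"
  proof (intro ballI, rule ccontr)
    fix x y assume x: "x \<in> S - C" and y: "y \<in> S - C" and xy: "x \<noteq> y"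
    have case_pp: False if "j1 \<in> {1..m}" "j2 \<in> {1..m}" "j1 \<noteq> q" "j2 \<noteq> q" "j1 \<noteq> j2"
        "(p, j1) \<notin> C" "(p, j2) \<notin> C" for j1 j2
    proof -
      have "(i0, j1) \<in> KV n m - C" "(i0, j2) \<in> KV n m - C"
        using that i0 notC by (auto simp: KV_def)
      moreover have "I_set (KV n m) cart_adj C (i0, j1) = I_set (KV n m) cart_adj C (i0, j2)"
        using Iform[of i0 j1] Iform[of i0 j2] that i0 by auto
      ultimately show False using dist that by auto
    qed
    have case_qq: False if "i1 \<in> {1..n}" "i2 \<in> {1..n}" "i1 \<noteq> p" "i2 \<noteq> p" "i1 \<noteq> i2"
        "(i1, q) \<notin> C" "(i2, q) \<notin> C" for i1 i2
    proof -
      have "(i1, j0) \<in> KV n m - C" "(i2, j0) \<in> KV n m - C"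
        using that j0 notC by (auto simp: KV_def)
      moreover have "I_set (KV n m) cart_adj C (i1, j0) = I_set (KV n m) cart_adj C (i2, j0)"
        using Iform[of i1 j0] Iform[of i2 j0] that j0 by auto
      ultimately show False using dist that by auto
    qed
    have case_pq: False if "j \<in> {1..m}" "i \<in> {1..n}" "j \<noteq> q" "i \<noteq> p"
        "(p, j) \<notin> C" "(i, q) \<notin> C" for i j
    proof -
      have "(i, j) \<in> KV n m - C"
        using that notC by (auto simp: KV_def)
      moreover have "I_set (KV n m) cart_adj C (i, j) = {}"
        using Iform[of i j] that by auto
      ultimately show False using dom by auto
    qed
    show False
      using x y xy case_pp case_qq case_pq unfolding S_def by blast
  qed
  have "card (S - C) \<le> Suc 0"
    using uniq finS by (simp add: card_le_Suc0_iff_eq)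
  moreover have "card (S - C) = card S - card C"
    using CS finS by (meson card_Diff_subset finite_subset)
  moreover have "card C \<le> card S" using CS finS by (simp add: card_mono)
  ultimately show ?thesis using cardS by linarith
qed
lemma D2B:
  assumes m5: "5 \<le> m"
    and u: "(a,b) \<in> KV 2 m - ({(1,1),(1,2)} \<union> {2} \<times> {3..<m})"
    and w: "(c,d) \<in> KV 2 m - ({(1,1),(1,2)} \<union> {2} \<times> {3..<m})"
    and eq: "I_set (KV 2 m) cart_adj ({(1,1),(1,2)} \<union> {2} \<times> {3..<m}) (a,b) = I_set (KV 2 m) cart_adj ({(1,1),(1,2)} \<union> {2} \<times> {3..<m}) (c,d)"
  shows "a = c \<and> b = d"
proof -
  have f1: "(1,1) \<in> I_set (KV 2 m) cart_adj ({(1,1),(1,2)} \<union> {2} \<times> {3..<m}) (a,b) \<longleftrightarrow> (1,1) \<in> I_set (KV 2 m) cart_adj ({(1,1),(1,2)} \<union> {2} \<times> {3..<m}) (c,d)"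
   and f2: "(1,2) \<in> I_set (KV 2 m) cart_adj ({(1,1),(1,2)} \<union> {2} \<times> {3..<m}) (a,b) \<longleftrightarrow> (1,2) \<in> I_set (KV 2 m) cart_adj ({(1,1),(1,2)} \<union> {2} \<times> {3..<m}) (c,d)"
   and f3: "(2,b) \<in> I_set (KV 2 m) cart_adj ({(1,1),(1,2)} \<union> {2} \<times> {3..<m}) (a,b) \<longleftrightarrow> (2,b) \<in> I_set (KV 2 m) cart_adj ({(1,1),(1,2)} \<union> {2} \<times> {3..<m}) (c,d)"
   and f4: "(2,d) \<in> I_set (KV 2 m) cart_adj ({(1,1),(1,2)} \<union> {2} \<times> {3..<m}) (a,b) \<longleftrightarrow> (2,d) \<in> I_set (KV 2 m) cart_adj ({(1,1),(1,2)} \<union> {2} \<times> {3..<m}) (c,d)"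
    using eq by simp_all
  note ff = f1 f2 f3 f4 u w
  have g: "1 \<le> a \<and> a \<le> 2 \<and> 1 \<le> b \<and> b \<le> m \<and> \<not>((a = 1 \<and> b = 1) \<or> (a = 1 \<and> b = 2) \<or> (a = 2 \<and> 3 \<le> b \<and> b < m))"
    using u by (auto simp: KV_def)
  have h: "1 \<le> c \<and> c \<le> 2 \<and> 1 \<le> d \<and> d \<le> m \<and> \<not>((c = 1 \<and> d = 1) \<or> (c = 1 \<and> d = 2) \<or> (c = 2 \<and> 3 \<le> d \<and> d < m))"
    using w by (auto simp: KV_def)
  show ?thesis using f1 f2 f3 f4 g h
    apply (simp only: memC KV_def mem_Sigma_iff atLeastAtMost_iff atLeastLessThan_iff Un_iff insert_iff singleton_iff empty_iff prod.inject)
    by presburger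
qed
lemma D1B:
  assumes n3: "3 \<le> n" and nm: "n \<le> m"
    and u: "(a,b) \<in> KV n m - (({1..n} - {2}) \<times> {1} \<union> {1} \<times> {2..<m})"
    and w: "(c,d) \<in> KV n m - (({1..n} - {2}) \<times> {1} \<union> {1} \<times> {2..<m})"
    and eq: "I_set (KV n m) cart_adj (({1..n} - {2}) \<times> {1} \<union> {1} \<times> {2..<m}) (a,b) = I_set (KV n m) cart_adj (({1..n} - {2}) \<times> {1} \<union> {1} \<times> {2..<m}) (c,d)"
  shows "a = c \<and> b = d"
proof -
  let ?I = "I_set (KV n m) cart_adj (({1..n} - {2}) \<times> {1} \<union> {1} \<times> {2..<m})"
  have f1: "(a,1) \<in> ?I (a,b) \<longleftrightarrow> (a,1) \<in> ?I (c,d)"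
   and f2: "(c,1) \<in> ?I (a,b) \<longleftrightarrow> (c,1) \<in> ?I (c,d)"
   and f3: "(1,b) \<in> ?I (a,b) \<longleftrightarrow> (1,b) \<in> ?I (c,d)"
   and f4: "(1,d) \<in> ?I (a,b) \<longleftrightarrow> (1,d) \<in> ?I (c,d)"
   and f5: "(1,1) \<in> ?I (a,b) \<longleftrightarrow> (1,1) \<in> ?I (c,d)"
   and f6: "(3,1) \<in> ?I (a,b) \<longleftrightarrow> (3,1) \<in> ?I (c,d)"
    using eq by simp_all
  have U: "(a = 2 \<and> b = 1) \<or> (a = 1 \<and> b = m) \<or> (2 \<le> a \<and> a \<le> n \<and> 2 \<le> b \<and> b \<le> m)"
    using u n3 nm by (auto simp: KV_def)
  have W: "(c = 2 \<and> d = 1) \<or> (c = 1 \<and> d = m) \<or> (2 \<le> c \<and> c \<le> n \<and> 2 \<le> d \<and> d \<le> m)"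
    using w n3 nm by (auto simp: KV_def)
  show ?thesis using U W f1 f2 f3 f4 f5 f6 n3 nm
    apply (elim disjE conjE)
    apply (simp_all add: memC KV_def)
    by (metis le_antisym nat_less_le)
qed

lemma D3B:
  assumes m2: "2 \<le> m"
    and u: "(a,b) \<in> KV 2 m - {1} \<times> {1..m}"
    and w: "(c,d) \<in> KV 2 m - {1} \<times> {1..m}"
    and eq: "I_set (KV 2 m) cart_adj ({1} \<times> {1..m}) (a,b) = I_set (KV 2 m) cart_adj ({1} \<times> {1..m}) (c,d)"
  shows "a = c \<and> b = d"
proof -
  let ?I = "I_set (KV 2 m) cart_adj ({1} \<times> {1..m})"
  have f3: "(1,b) \<in> ?I (a,b) \<longleftrightarrow> (1,b) \<in> ?I (c,d)"
   and f4: "(1,d) \<in> ?I (a,b) \<longleftrightarrow> (1,d) \<in> ?I (c,d)"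
    using eq by simp_all
  show ?thesis using f3 f4 u w m2
    apply (simp only: memC KV_def mem_Sigma_iff atLeastAtMost_iff atLeastLessThan_iff Un_iff insert_iff singleton_iff empty_iff prod.inject Diff_iff)
    by presburger
qed
lemma D1_LD:
  assumes n3: "3 \<le> n" and nm: "n \<le> m"
  shows "is_LD (KV n m) direct_adj (({1..n} - {2}) \<times> {1} \<union> {1} \<times> {2..<m})"
    (is "is_LD ?V _ ?D")
proof -
  have sub: "?D \<subseteq> ?V" "?D \<noteq> {}" using n3 nm by (auto simp: KV_def)
  have A: "I_set ?V cart_adj ?D u \<noteq> ?D" if u: "u \<in> ?V - ?D" for u
  proof
    assume eq: "I_set ?V cart_adj ?D u = ?D"
    obtain a b where ab: "u = (a, b)" by (cases u)
    have "(1,1) \<in> ?D" "(1,2) \<in> ?D" "(3,1) \<in> ?D" using n3 nm by auto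
    then have "(1,1) \<in> I_set ?V cart_adj ?D u" "(1,2) \<in> I_set ?V cart_adj ?D u"
      "(3,1) \<in> I_set ?V cart_adj ?D u" using eq by auto
    then show False using u ab by (auto simp: memC KV_def)
  qed
  have B: "I_set ?V cart_adj ?D u \<noteq> I_set ?V cart_adj ?D w"
    if u: "u \<in> ?V - ?D" and w: "w \<in> ?V - ?D" and uw: "u \<noteq> w" for u w
  proof
    assume eq: "I_set ?V cart_adj ?D u = I_set ?V cart_adj ?D w"
    obtain a b where ab: "u = (a, b)" by (cases u)
    obtain c d where cd: "w = (c, d)" by (cases w)
    show False using D1B[OF n3 nm u[unfolded ab] w[unfolded cd] eq[unfolded ab cd]] uw ab cd by simp
  qed
  show ?thesis using sub A B by (simp add: dir_LD_iff)
qed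

lemma D1_card:
  assumes n3: "3 \<le> n" and nm: "n \<le> m"
  shows "card (({1..n} - {2}) \<times> {1} \<union> {1} \<times> {2..<m}) = n + m - 3"
proof -
  have "card (({1..n} - {2}) \<times> {1} \<union> {1} \<times> {2..<m}) = card (({1..n} - {2}) \<times> {1::nat}) + card ({1::nat} \<times> {2..<m})"
    by (rule card_Un_disjoint) auto
  then show ?thesis using n3 nm by (simp add: card_cartesian_product)
qed

lemma D2_LD:
  assumes m5: "5 \<le> m"
  shows "is_LD (KV 2 m) direct_adj ({(1,1),(1,2)} \<union> {2} \<times> {3..<m})"
    (is "is_LD ?V _ ?D")
proof -
  have sub: "?D \<subseteq> ?V" "?D \<noteq> {}" using m5 by (auto simp: KV_def)
  have A: "I_set ?V cart_adj ?D u \<noteq> ?D" if u: "u \<in> ?V - ?D" for u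
  proof
    assume eq: "I_set ?V cart_adj ?D u = ?D"
    obtain a b where ab: "u = (a, b)" by (cases u)
    have "(1,1) \<in> ?D" "(1,2) \<in> ?D" "(2,3) \<in> ?D" "(2,4) \<in> ?D" using m5 by auto
    then have "(1,1) \<in> I_set ?V cart_adj ?D u" "(1,2) \<in> I_set ?V cart_adj ?D u"
      "(2,3) \<in> I_set ?V cart_adj ?D u" "(2,4) \<in> I_set ?V cart_adj ?D u" using eq by auto
    then show False using u ab by (auto simp: memC KV_def)
  qed
  have B: "I_set ?V cart_adj ?D u \<noteq> I_set ?V cart_adj ?D w"
    if u: "u \<in> ?V - ?D" and w: "w \<in> ?V - ?D" and uw: "u \<noteq> w" for u w
  proof
    assume eq: "I_set ?V cart_adj ?D u = I_set ?V cart_adj ?D w"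
    obtain a b where ab: "u = (a, b)" by (cases u)
    obtain c d where cd: "w = (c, d)" by (cases w)
    show False using D2B[OF m5 u[unfolded ab] w[unfolded cd] eq[unfolded ab cd]] uw ab cd by simp
  qed
  show ?thesis using sub A B by (simp add: dir_LD_iff)
qed

lemma D2_card:
  assumes m5: "5 \<le> m"
  shows "card ({(1::nat,1::nat),(1,2)} \<union> {2} \<times> {3..<m}) = m - 1"
proof -
  have "card ({(1::nat,1::nat),(1,2)} \<union> {2} \<times> {3..<m}) = card {(1::nat,1::nat),(1,2)} + card ({2::nat} \<times> {3..<m})"
    by (rule card_Un_disjoint) auto
  then show ?thesis using m5 by (simp add: card_cartesian_product)
qed

lemma D3_LD:
  assumes m2: "2 \<le> m"
  shows "is_LD (KV 2 m) direct_adj ({1} \<times> {1..m})"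
    (is "is_LD ?V _ ?D")
proof -
  have sub: "?D \<subseteq> ?V" "?D \<noteq> {}" using m2 by (auto simp: KV_def)
  have A: "I_set ?V cart_adj ?D u \<noteq> ?D" if u: "u \<in> ?V - ?D" for u
  proof
    assume eq: "I_set ?V cart_adj ?D u = ?D"
    obtain a b where ab: "u = (a, b)" by (cases u)
    have "(1,1) \<in> ?D" "(1,2) \<in> ?D" using m2 by auto
    then have "(1,1) \<in> I_set ?V cart_adj ?D u" "(1,2) \<in> I_set ?V cart_adj ?D u"
      using eq by auto
    then show False using u ab by (auto simp: memC KV_def)
  qed
  have B: "I_set ?V cart_adj ?D u \<noteq> I_set ?V cart_adj ?D w"
    if u: "u \<in> ?V - ?D" and w: "w \<in> ?V - ?D" and uw: "u \<noteq> w" for u w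
  proof
    assume eq: "I_set ?V cart_adj ?D u = I_set ?V cart_adj ?D w"
    obtain a b where ab: "u = (a, b)" by (cases u)
    obtain c d where cd: "w = (c, d)" by (cases w)
    show False using D3B[OF m2 u[unfolded ab] w[unfolded cd] eq[unfolded ab cd]] uw ab cd by simp
  qed
  show ?thesis using sub A B by (simp add: dir_LD_iff)
qed

lemma D3_card: "card ({1::nat} \<times> {1..m::nat}) = m"
  by (simp add: card_cartesian_product)

lemma I_insert_inter:
  assumes "v \<notin> C"
  shows "I_set V adj (insert v C) u \<inter> C = I_set V adj C u"
  using assms by (auto simp: mem_I)

lemma I_mono_insert: "I_set V adj C u \<subseteq> I_set V adj (insert v C) u"
  by (auto simp: mem_I)

theorem lemma14:
  fixes n m :: nat
  assumes "2 \<le> n" and "n \<le> m" and "(n, m) \<noteq> (2, 4)"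
  shows "gamma_LD (KV n m) cart_adj - 1 \<le> gamma_LD (KV n m) direct_adj
       \<and> gamma_LD (KV n m) direct_adj \<le> gamma_LD (KV n m) cart_adj
       \<and> (gamma_LD (KV n m) direct_adj = gamma_LD (KV n m) cart_adj - 1 \<longrightarrow>
          (\<forall>C. is_LD (KV n m) direct_adj C \<and> card C = gamma_LD (KV n m) direct_adj \<longrightarrow>
             (\<exists>v \<in> KV n m - C. I_set (KV n m) direct_adj C v = C)))"
proof -
  define V where "V = KV n m"
  define gc where "gc = gamma_LD V cart_adj"
  define gd where "gd = gamma_LD V direct_adj"
  have n2: "2 \<le> n" and nm: "n \<le> m" and n24: "(n, m) \<noteq> (2, 4)" using assms by auto
  have Vne: "V \<noteq> {}" using n2 nm unfolding V_def KV_def by force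
  have finV: "finite V" unfolding V_def KV_def by simp
  have cardV: "card V = n * m" unfolding V_def KV_def by (simp add: card_cartesian_product)
  obtain Cc where Cc: "is_LD V cart_adj Cc" "card Cc = gc"
    using gamma_ex[OF Vne] unfolding gc_def by blast
  obtain Cd where Cd: "is_LD V direct_adj Cd" "card Cd = gd"
    using gamma_ex[OF Vne] unfolding gd_def by blast
  have CcV: "Cc \<subseteq> V" "Cc \<noteq> {}" using Cc(1) by (auto simp: is_LD_def)
  have CdV: "Cd \<subseteq> V" "Cd \<noteq> {}" using Cd(1) by (auto simp: is_LD_def)
  have finCd: "finite Cd" using CdV finV finite_subset by blast
  have finCc: "finite Cc" using CcV finV finite_subset by blast
  have gc1: "1 \<le> gc" using Cc(2) CcV finCc by (metis card_0_eq less_one not_le)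
  have dir_to_cart: "is_LD V cart_adj C"
    if C: "is_LD V direct_adj C" and ne: "\<forall>v \<in> V - C. I_set V cart_adj C v \<noteq> {}" for C
  proof -
    have CV: "C \<subseteq> V" "C \<noteq> {}" using C by (auto simp: is_LD_def)
    have "\<forall>u \<in> V - C. \<forall>w \<in> V - C. u \<noteq> w \<longrightarrow> I_set V cart_adj C u \<noteq> I_set V cart_adj C w"
      using C dir_LD_iff[OF CV] by blast
    then show ?thesis using CV ne unfolding is_LD_def by blast
  qed
  have P1: "gc - 1 \<le> gd"
  proof (cases "\<exists>v \<in> V - Cd. I_set V cart_adj Cd v = {}")
    case True
    then obtain v where v: "v \<in> V - Cd" "I_set V cart_adj Cd v = {}" by blast
    have dist: "\<forall>u \<in> V - Cd. \<forall>w \<in> V - Cd. u \<noteq> w \<longrightarrow> I_set V cart_adj Cd u \<noteq> I_set V cart_adj Cd w"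
      using Cd(1) CdV by (simp add: dir_LD_iff)
    have "is_LD V cart_adj (insert v Cd)"
      unfolding is_LD_def
    proof (intro conjI ballI impI)
      show "insert v Cd \<subseteq> V" using v CdV by auto
      show "insert v Cd \<noteq> {}" by simp
    next
      fix u assume u: "u \<in> V - insert v Cd"
      then have "I_set V cart_adj Cd u \<noteq> {}" using dist v by auto
      then show "I_set V cart_adj (insert v Cd) u \<noteq> {}"
        using I_mono_insert[of V cart_adj Cd u v] by blast
    next
      fix u w assume u: "u \<in> V - insert v Cd" and w: "w \<in> V - insert v Cd" and uw: "u \<noteq> w"
      have "I_set V cart_adj Cd u \<noteq> I_set V cart_adj Cd w" using dist u w uw by auto
      show "I_set V cart_adj (insert v Cd) u \<noteq> I_set V cart_adj (insert v Cd) w"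
      proof
        assume "I_set V cart_adj (insert v Cd) u = I_set V cart_adj (insert v Cd) w"
        then have "I_set V cart_adj (insert v Cd) u \<inter> Cd = I_set V cart_adj (insert v Cd) w \<inter> Cd" by simp
        then show False using I_insert_inter[of v Cd V cart_adj u] I_insert_inter[of v Cd V cart_adj w] v
          \<open>I_set V cart_adj Cd u \<noteq> I_set V cart_adj Cd w\<close> by simp
      qed
    qed
    then have "gc \<le> card (insert v Cd)" unfolding gc_def by (rule gamma_le)
    also have "\<dots> = gd + 1" using v finCd Cd(2) by simp
    finally show ?thesis by simp
  next
    case False
    then have "is_LD V cart_adj Cd" using dir_to_cart[OF Cd(1)] by blast
    then have "gc \<le> gd" using Cd(2) unfolding gc_def by (metis gamma_le)
    then show ?thesis by simp
  qed
  have P2: "gd \<le> gc"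
  proof (cases "\<exists>v \<in> V - Cc. I_set V cart_adj Cc v = Cc")
    case False
    have "is_LD V direct_adj Cc"
    proof -
      have "\<forall>u \<in> V - Cc. \<forall>w \<in> V - Cc. u \<noteq> w \<longrightarrow> I_set V cart_adj Cc u \<noteq> I_set V cart_adj Cc w"
        using Cc(1) by (simp add: is_LD_def)
      then show ?thesis using dir_LD_iff[OF CcV] False by blast
    qed
    then show ?thesis using Cc(2) unfolding gd_def by (metis gamma_le)
  next
    case True
    then obtain v where v: "v \<in> V - Cc" "I_set V cart_adj Cc v = Cc" by blast
    have lb: "n + m - 3 \<le> gc"
      using struct_lb[OF n2 _ Cc(1)[unfolded V_def] v[unfolded V_def]] nm n2 Cc(2) by simp
    have cnt: "card (V - Cc) + 1 \<le> 2 ^ gc" using count_LD[OF finV Cc(1)] Cc(2) by simp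
    have cVC: "card (V - Cc) = n * m - gc" using CcV finCc cardV Cc(2) by (simp add: card_Diff_subset)
    show ?thesis
    proof (cases "3 \<le> n")
      case True
      have "gd \<le> n + m - 3"
        using gamma_le[OF D1_LD[OF True nm]] D1_card[OF True nm] unfolding gd_def V_def by simp
      then show ?thesis using lb by simp
    next
      case False
      then have n2': "n = 2" using n2 by simp
      have "m = 2 \<or> m = 3 \<or> 5 \<le> m" using n2' nm n24 by auto
      moreover {
        assume m5: "5 \<le> m"
        have "gd \<le> m - 1"
          using gamma_le[OF D2_LD[OF m5]] D2_card[OF m5] unfolding gd_def V_def n2' by simp
        then have ?thesis using lb n2' by simp }
      moreover {
        assume m23: "m = 2 \<or> m = 3"
        have "gd \<le> m"
        proof -
          have m2: "2 \<le> m" using m23 by auto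
          show ?thesis
            using gamma_le[OF D3_LD[OF m2]] D3_card[of m] unfolding gd_def V_def n2' by simp
        qed
        moreover have "m \<le> gc"
        proof (rule ccontr)
          assume lt: "\<not> m \<le> gc"
          then have "gc = 1 \<or> gc = 2" using gc1 m23 by auto
          then show False using cnt cVC m23 n2' lb lt by auto
        qed
        ultimately have ?thesis by simp }
      ultimately show ?thesis by blast
    qed
  qed
  have P3: "\<exists>v \<in> V - C. I_set V direct_adj C v = C"
    if eq: "gd = gc - 1" and C: "is_LD V direct_adj C" "card C = gd" for C
  proof (rule ccontr)
    assume nex: "\<not> (\<exists>v \<in> V - C. I_set V direct_adj C v = C)"
    have CV: "C \<subseteq> V" using C by (auto simp: is_LD_def)
    have "\<forall>v \<in> V - C. I_set V cart_adj C v \<noteq> {}"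
    proof
      fix v assume v: "v \<in> V - C"
      show "I_set V cart_adj C v \<noteq> {}"
      proof
        assume "I_set V cart_adj C v = {}"
        then have "I_set V direct_adj C v = C" using I_dir_eq[of v C V] v CV by simp
        then show False using nex v by blast
      qed
    qed
    then have "is_LD V cart_adj C" using dir_to_cart[OF C(1)] by blast
    then have "gc \<le> gd" using C(2) unfolding gc_def by (metis gamma_le)
    then show False using eq gc1 by simp
  qed
  show ?thesis
    using P1 P2 P3 unfolding gc_def gd_def V_def by blast
qed

end
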